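(* Let $h$ be a Hermitian $2\times2$ matrix with eigenvalues $\varepsilon_0<\varepsilon_1$, and set $H_A=H_B=h$. Let $\rho=(\rho_{ij})$ be a two-qubit density matrix (basis $|00\rangle,|01\rangle,|10\rangle,|11\rangle$). (i) Let $\mu_1\le\mu_2\le\mu_3\le\mu_4$ be the diagonal entries $\rho_{11},\dots,\rho_{44}$ in ascending order and let $P$ be a permutation matrix such that $P\rho P^\dagger$ has diagonal $(\mu_4,\mu_3,\mu_2,\mu_1)$. Then $Sub_{ic}(P\rho P^\dagger)\ge Sub_{ic}(\rho)$. (ii) Let $U$ be any $4\times4$ unitary, $\tilde\rho=U\rho U^\dagger$, let $\lambda_1^A,\lambda_1^B$ be the largest eigenvalues of $\rho_A,\rho_B$, and let $\xi_1^A,\xi_1^B$ be the largest eigenvalues of $\tilde\tau_A,\tilde\tau_B$, the reduced states of the dephased state $\tilde\tau=\mathrm{diag}(\tilde\rho_{11},\tilde\rho_{22},\tilde\rho_{33},\tilde\rho_{44})$ (equivalently, the largest diagonal entries of $\tilde\rho_A,\tilde\rho_B$). If $\xi_1^A+\xi_1^B>\lambda_1^A+\lambda_1^B$, then $Sub(\tilde\rho)>Sub(\rho)$.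
   Context: Quantum battery capacity: for Hermitian $H$ on $\mathbb{C}^d$ with eigenvalues $\epsilon_0\le\dots\le\epsilon_{d-1}$ and density matrix $\rho$ with eigenvalues $\lambda_0\le\dots\le\lambda_{d-1}$, $\mathcal{C}(\rho;H)=\sum_i\epsilon_i(\lambda_i-\lambda_{d-1-i})$. For a two-qubit state $\rho$ with reduced states $\rho_A,\rho_B$: $Sub(\rho)=\mathcal{C}(\rho_A;H_A)+\mathcal{C}(\rho_B;H_B)$; the dephased state is $\tau=\mathrm{diag}(\rho_{11},\rho_{22},\rho_{33},\rho_{44})$ in the computational basis, and $Sub_{ic}(\rho)=\mathcal{C}(\tau_A;H_A)+\mathcal{C}(\tau_B;H_B)$ where $\tau_A,\tau_B$ are the reduced states of $\tau$. *)

theory Defs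
  imports "Jordan_Normal_Form.Matrix" "Jordan_Normal_Form.Char_Poly"
    "HOL-Computational_Algebra.Fundamental_Theorem_Algebra"
    "HOL-Combinatorics.Permutations"
begin

definition adj :: "complex mat \<Rightarrow> complex mat" where
  "adj A = mat (dim_col A) (dim_row A) (\<lambda>(i,j). cnj (A $$ (j,i)))"

definition hermitian_mat :: "nat \<Rightarrow> complex mat \<Rightarrow> bool" where
  "hermitian_mat n A \<longleftrightarrow> A \<in> carrier_mat n n \<and> adj A = A"

definition unitary_mat :: "nat \<Rightarrow> complex mat \<Rightarrow> bool" where
  "unitary_mat n U \<longleftrightarrow> U \<in> carrier_mat n n \<and> adj U * U = 1\<^sub>m n \<and> U * adj U = 1\<^sub>m n"

definition density_mat :: "nat \<Rightarrow> complex mat \<Rightarrow> bool" where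
  "density_mat n A \<longleftrightarrow> hermitian_mat n A \<and>
     (\<forall>v \<in> carrier_vec n. Im (conjugate v \<bullet> (A *\<^sub>v v)) = 0 \<and> Re (conjugate v \<bullet> (A *\<^sub>v v)) \<ge> 0) \<and>
     (\<Sum>i<n. A $$ (i,i)) = 1"

definition eigs :: "complex mat \<Rightarrow> real list" where
  "eigs A = sorted_list_of_multiset (image_mset Re (proots (char_poly A)))"

definition capacity :: "complex mat \<Rightarrow> complex mat \<Rightarrow> real" where
  "capacity \<rho> H = (let d = dim_row \<rho>; \<epsilon> = eigs H; lam = eigs \<rho> in
     (\<Sum>i<d. \<epsilon> ! i * (lam ! i - lam ! (d - 1 - i))))"

(* two-qubit partial traces; basis index 2a+b for |ab>, a = qubit A *)
definition ptrace_B :: "complex mat \<Rightarrow> complex mat" where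
  "ptrace_B \<rho> = mat 2 2 (\<lambda>(i,j). \<Sum>k<2. \<rho> $$ (2*i+k, 2*j+k))"

definition ptrace_A :: "complex mat \<Rightarrow> complex mat" where
  "ptrace_A \<rho> = mat 2 2 (\<lambda>(i,j). \<Sum>k<2. \<rho> $$ (2*k+i, 2*k+j))"

(* rho_A = reduced state on A (trace out B), rho_B likewise *)
abbreviation red_A :: "complex mat \<Rightarrow> complex mat" where "red_A \<equiv> ptrace_B"
abbreviation red_B :: "complex mat \<Rightarrow> complex mat" where "red_B \<equiv> ptrace_A"

definition dephase :: "complex mat \<Rightarrow> complex mat" where
  "dephase \<rho> = mat (dim_row \<rho>) (dim_col \<rho>) (\<lambda>(i,j). if i = j then \<rho> $$ (i,i) else 0)"

definition Sub :: "complex mat \<Rightarrow> complex mat \<Rightarrow> complex mat \<Rightarrow> real" where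
  "Sub HA HB \<rho> = capacity (red_A \<rho>) HA + capacity (red_B \<rho>) HB"

definition Sub_ic :: "complex mat \<Rightarrow> complex mat \<Rightarrow> complex mat \<Rightarrow> real" where
  "Sub_ic HA HB \<rho> = capacity (red_A (dephase \<rho>)) HA + capacity (red_B (dephase \<rho>)) HB"

definition perm_mat :: "nat \<Rightarrow> (nat \<Rightarrow> nat) \<Rightarrow> complex mat" where
  "perm_mat n \<sigma> = mat n n (\<lambda>(i,j). if i = \<sigma> j then 1 else 0)"

definition diag_list :: "complex mat \<Rightarrow> real list" where
  "diag_list \<rho> = map (\<lambda>i. Re (\<rho> $$ (i,i))) [0..<dim_row \<rho>]"

end

theory Submission
  imports Defs
begin
lemma det2: assumes "A \<in> carrier_mat 2 2"
  shows "det A = A$$(0,0)*A$$(1,1) - A$$(0,1)*A$$(1,0)"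
proof -
  have d1: "det B = B $$ (0,0)" if "B \<in> carrier_mat 1 1" for B :: "'a::comm_ring_1 mat"
    using that by (simp add: det_def' )
  show ?thesis
    apply (subst laplace_expansion_column[OF assms, of 0])
     apply simp
    apply (simp add: cofactor_def numeral_2_eq_2 lessThan_Suc)
    apply (subst d1, simp add: mat_delete_carrier[OF assms, simplified])+
    using assms by (auto simp: mat_delete_def numeral_2_eq_2)
qed

lemma eigs2: assumes A: "A \<in> carrier_mat 2 2"
  and xy: "x + y = A$$(0,0) + A$$(1,1)" "x * y = A$$(0,0)*A$$(1,1) - A$$(0,1)*A$$(1,0)"
  shows "eigs A = (if Re x \<le> Re y then [Re x, Re y] else [Re y, Re x])"
proof -
  have cm: "char_poly_matrix A \<in> carrier_mat 2 2" using A by simp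
  have "char_poly A = [:-x,1:]*[:-y,1:]"
    unfolding char_poly_def det2[OF cm] using A xy
    by (simp add: char_poly_matrix_def algebra_simps)
  moreover have "proots ([:-x,1:]*[:-y,1:]) = {#x, y#}"
    by (subst proots_mult) auto
  ultimately have "proots (char_poly A) = {#x, y#}" by simp
  then show ?thesis unfolding eigs_def by simp
qed
lemma cap2: assumes "dim_row M = 2" "eigs M = [l0, l1]"
  shows "capacity M H = (eigs H ! 1 - eigs H ! 0) * (l1 - l0)"
  using assms unfolding capacity_def Let_def by (simp add: numeral_2_eq_2 lessThan_Suc algebra_simps)

lemma herm2: assumes A: "A \<in> carrier_mat 2 2"
  and r: "Im (A$$(0,0)) = 0" "Im (A$$(1,1)) = 0" and c: "A$$(1,0) = cnj (A$$(0,1))"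
  shows "eigs A = [(Re (A$$(0,0)) + Re (A$$(1,1)) - sqrt ((Re (A$$(0,0)) - Re (A$$(1,1)))^2 + 4 * (cmod (A$$(0,1)))^2))/2,
                   (Re (A$$(0,0)) + Re (A$$(1,1)) + sqrt ((Re (A$$(0,0)) - Re (A$$(1,1)))^2 + 4 * (cmod (A$$(0,1)))^2))/2]"
proof -
  define a where "a = Re (A$$(0,0))"
  define d where "d = Re (A$$(1,1))"
  define b where "b = A$$(0,1)"
  define s where "s = sqrt ((a - d)^2 + 4 * (cmod b)^2)"
  have s0: "s \<ge> 0" unfolding s_def by simp
  have ss: "s^2 = (a - d)^2 + 4 * (cmod b)^2" unfolding s_def by simp
  have A00: "A$$(0,0) = complex_of_real a" using r(1) unfolding a_def by (simp add: complex_eq_iff)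
  have A11: "A$$(1,1) = complex_of_real d" using r(2) unfolding d_def by (simp add: complex_eq_iff)
  have bb: "b * cnj b = complex_of_real ((cmod b)^2)" using complex_norm_square[of b] by simp
  have e: "eigs A = (if Re (complex_of_real ((a+d-s)/2)) \<le> Re (complex_of_real ((a+d+s)/2))
     then [Re (complex_of_real ((a+d-s)/2)), Re (complex_of_real ((a+d+s)/2))]
     else [Re (complex_of_real ((a+d+s)/2)), Re (complex_of_real ((a+d-s)/2))])"
  proof (rule eigs2[OF A])
    show "complex_of_real ((a + d - s) / 2) + complex_of_real ((a + d + s) / 2) = A $$ (0, 0) + A $$ (1, 1)"
      unfolding A00 A11 by (simp add: field_simps)
    have "((a + d - s) / 2) * ((a + d + s) / 2) = a * d - (cmod b)^2"
      using ss by (simp add: field_simps power2_eq_square)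
    then show "complex_of_real ((a + d - s) / 2) * complex_of_real ((a + d + s) / 2) =
        A $$ (0, 0) * A $$ (1, 1) - A $$ (0, 1) * A $$ (1, 0)"
      unfolding A00 A11 c b_def[symmetric] bb
      by (metis of_real_diff of_real_mult)
  qed
  show ?thesis using e s0 unfolding a_def[symmetric] d_def[symmetric] b_def[symmetric] s_def[symmetric]
    by simp
qed

lemma diag2: assumes A: "A \<in> carrier_mat 2 2" and "A$$(0,1) = 0"
  shows "eigs A = (if Re (A$$(0,0)) \<le> Re (A$$(1,1)) then [Re (A$$(0,0)), Re (A$$(1,1))] else [Re (A$$(1,1)), Re (A$$(0,0))])"
  by (rule eigs2[OF A]) (use assms in auto)

lemma adj_carrier[simp]: "A \<in> carrier_mat n m \<Longrightarrow> adj A \<in> carrier_mat m n"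
  unfolding adj_def by auto
lemma adj_dims[simp]: "dim_row (adj A) = dim_col A" "dim_col (adj A) = dim_row A"
  unfolding adj_def by auto
lemma adj_adj[simp]: "adj (adj A) = A"
  unfolding adj_def by (auto intro!: eq_matI)
lemma adj_mult: assumes "A \<in> carrier_mat n m" "B \<in> carrier_mat m k"
  shows "adj (A * B) = adj B * adj A"
  using assms unfolding adj_def
  by (auto intro!: eq_matI sum.cong simp: scalar_prod_def row_def col_def mult.commute)

definition tr :: "complex mat \<Rightarrow> complex" where "tr A = (\<Sum>i<dim_row A. A$$(i,i))"

lemma tr_comm: assumes "A \<in> carrier_mat n m" "B \<in> carrier_mat m n"
  shows "tr (A * B) = tr (B * A)"
proof -
  have "tr (A * B) = (\<Sum>i<n. \<Sum>j<m. A$$(i,j) * B$$(j,i))"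
    using assms by (simp add: tr_def scalar_prod_def atLeast0LessThan)
  also have "\<dots> = (\<Sum>j<m. \<Sum>i<n. B$$(j,i) * A$$(i,j))"
    by (subst sum.swap) (simp add: mult.commute)
  also have "\<dots> = tr (B * A)"
    using assms by (simp add: tr_def scalar_prod_def atLeast0LessThan)
  finally show ?thesis .
qed
lemma herm2_cap: assumes A: "A \<in> carrier_mat 2 2"
  and r: "Im (A$$(0,0)) = 0" "Im (A$$(1,1)) = 0" and c: "A$$(1,0) = cnj (A$$(0,1))"
  shows "capacity A H = (eigs H ! 1 - eigs H ! 0) * (2 * last (eigs A) - Re (A$$(0,0)) - Re (A$$(1,1)))"
    "last (eigs A) \<ge> Re (A$$(0,0))" "last (eigs A) \<ge> Re (A$$(1,1))"
proof -
  define a where "a = Re (A$$(0,0))"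
  define d where "d = Re (A$$(1,1))"
  define s where "s = sqrt ((a - d)^2 + 4 * (cmod (A$$(0,1)))^2)"
  have e: "eigs A = [(a+d-s)/2, (a+d+s)/2]" using herm2[OF assms] unfolding a_def d_def s_def .
  have "sqrt ((a-d)^2) \<le> s" unfolding s_def by (rule real_sqrt_le_mono) simp
  then have sa: "\<bar>a - d\<bar> \<le> s" by simp
  show "capacity A H = (eigs H ! 1 - eigs H ! 0) * (2 * last (eigs A) - Re (A$$(0,0)) - Re (A$$(1,1)))"
    using cap2[OF _ e, of H] A unfolding a_def[symmetric] d_def[symmetric] e by (simp add: field_simps)
  show "last (eigs A) \<ge> Re (A$$(0,0))" "last (eigs A) \<ge> Re (A$$(1,1))"
    unfolding a_def[symmetric] d_def[symmetric] e using sa by auto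
qed

lemma diag2_cap: assumes A: "A \<in> carrier_mat 2 2" and "A$$(0,1) = 0"
  shows "capacity A H = (eigs H ! 1 - eigs H ! 0) * \<bar>Re (A$$(0,0)) - Re (A$$(1,1))\<bar>"
    "last (eigs A) = max (Re (A$$(0,0))) (Re (A$$(1,1)))"
  using diag2[OF assms] cap2[of A _ _ H] A by (auto split: if_splits)

lemma sucs: "Suc (Suc (Suc 0)) = 3" "Suc (Suc 0) = 2" by auto

lemma lt2: "{..<2::nat} = {0,1}" by auto

lemma redA_carrier[simp]: "red_A M \<in> carrier_mat 2 2" unfolding ptrace_B_def by simp
lemma redB_carrier[simp]: "red_B M \<in> carrier_mat 2 2" unfolding ptrace_A_def by simp

lemma subic_formula: assumes M: "M \<in> carrier_mat 4 4"
  shows "Sub_ic h h M = (eigs h ! 1 - eigs h ! 0) *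
    (\<bar>Re (M$$(0,0)) + Re (M$$(1,1)) - Re (M$$(2,2)) - Re (M$$(3,3))\<bar> +
     \<bar>Re (M$$(0,0)) + Re (M$$(2,2)) - Re (M$$(1,1)) - Re (M$$(3,3))\<bar>)"
proof -
  have a: "capacity (red_A (dephase M)) h = (eigs h ! 1 - eigs h ! 0) * \<bar>Re (M$$(0,0)) + Re (M$$(1,1)) - Re (M$$(2,2)) - Re (M$$(3,3))\<bar>"
    by (subst diag2_cap(1)) (use M in \<open>auto simp: ptrace_B_def dephase_def lt2 sucs\<close>)
  have b: "capacity (red_B (dephase M)) h = (eigs h ! 1 - eigs h ! 0) * \<bar>Re (M$$(0,0)) + Re (M$$(2,2)) - Re (M$$(1,1)) - Re (M$$(3,3))\<bar>"
    by (subst diag2_cap(1)) (use M in \<open>auto simp: ptrace_A_def dephase_def lt2 sucs\<close>)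
  show ?thesis unfolding Sub_ic_def a b by (simp add: algebra_simps)
qed

lemma herm_entry: assumes "M \<in> carrier_mat n n" "adj M = M" "i < n" "j < n"
  shows "M$$(i,j) = cnj (M$$(j,i))"
proof -
  have "adj M $$ (i,j) = cnj (M$$(j,i))" using assms(1,3,4) unfolding adj_def by auto
  then show ?thesis unfolding assms(2) .
qed

lemma sub_formula: assumes M: "M \<in> carrier_mat 4 4" and hM: "adj M = M"
  and t: "Re (M$$(0,0)) + Re (M$$(1,1)) + Re (M$$(2,2)) + Re (M$$(3,3)) = 1"
  shows "Sub h h M = (eigs h ! 1 - eigs h ! 0) * (2 * last (eigs (red_A M)) + 2 * last (eigs (red_B M)) - 2)"
    "last (eigs (red_A M)) \<ge> Re (M$$(0,0)) + Re (M$$(1,1))"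
    "last (eigs (red_A M)) \<ge> Re (M$$(2,2)) + Re (M$$(3,3))"
    "last (eigs (red_B M)) \<ge> Re (M$$(0,0)) + Re (M$$(2,2))"
    "last (eigs (red_B M)) \<ge> Re (M$$(1,1)) + Re (M$$(3,3))"
proof -
  have e: "M$$(i,j) = cnj (M$$(j,i))" if "i < 4" "j < 4" for i j using herm_entry[OF M hM that] .
  have im: "Im (M$$(i,i)) = 0" if "i < 4" for i using e[OF that that]
    by (metis cnj.simps(2) complex.sel(2) complex_cnj_cancel_iff neg_equal_zero)
  have A: "Im (red_A M $$ (0,0)) = 0" "Im (red_A M $$ (1,1)) = 0" "red_A M $$ (1,0) = cnj (red_A M $$ (0,1))"
    "Re (red_A M $$ (0,0)) = Re (M$$(0,0)) + Re (M$$(1,1))" "Re (red_A M $$ (1,1)) = Re (M$$(2,2)) + Re (M$$(3,3))"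
    using im[of 0] im[of 1] im[of 2] im[of 3] e[of 2 0] e[of 3 1]
    by (auto simp: ptrace_B_def lt2 sucs)
  have B: "Im (red_B M $$ (0,0)) = 0" "Im (red_B M $$ (1,1)) = 0" "red_B M $$ (1,0) = cnj (red_B M $$ (0,1))"
    "Re (red_B M $$ (0,0)) = Re (M$$(0,0)) + Re (M$$(2,2))" "Re (red_B M $$ (1,1)) = Re (M$$(1,1)) + Re (M$$(3,3))"
    using im[of 0] im[of 1] im[of 2] im[of 3] e[of 1 0] e[of 3 2]
    by (auto simp: ptrace_A_def lt2 sucs)
  note ca = herm2_cap[OF redA_carrier[of M] A(1-3)]
  note cb = herm2_cap[OF redB_carrier[of M] B(1-3)]
  show "Sub h h M = (eigs h ! 1 - eigs h ! 0) * (2 * last (eigs (red_A M)) + 2 * last (eigs (red_B M)) - 2)"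
    unfolding Sub_def ca(1) cb(1) A(4,5) B(4,5) using t by (simp add: algebra_simps)
  show "last (eigs (red_A M)) \<ge> Re (M$$(0,0)) + Re (M$$(1,1))"
    "last (eigs (red_A M)) \<ge> Re (M$$(2,2)) + Re (M$$(3,3))"
    "last (eigs (red_B M)) \<ge> Re (M$$(0,0)) + Re (M$$(2,2))"
    "last (eigs (red_B M)) \<ge> Re (M$$(1,1)) + Re (M$$(3,3))"
    using ca(2,3) cb(2,3) A(4,5) B(4,5) by auto
qed

lemma dephase_last: assumes M: "M \<in> carrier_mat 4 4"
  shows "last (eigs (red_A (dephase M))) = max (Re (M$$(0,0)) + Re (M$$(1,1))) (Re (M$$(2,2)) + Re (M$$(3,3)))"
    "last (eigs (red_B (dephase M))) = max (Re (M$$(0,0)) + Re (M$$(2,2))) (Re (M$$(1,1)) + Re (M$$(3,3)))"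
  by (subst diag2_cap(2), (use M in \<open>auto simp: ptrace_B_def ptrace_A_def dephase_def lt2 sucs\<close>))+
lemma lt4: "{..<4::nat} = {0,1,2,3}" by auto

lemma list4: assumes "length xs = 4" shows "\<exists>a b c d. xs = [a,b,c,d]"
  using assms by (simp add: numeral_eq_Suc length_Suc_conv) blast

lemma diag_list4: "M \<in> carrier_mat 4 4 \<Longrightarrow> diag_list M = [Re (M$$(0,0)), Re (M$$(1,1)), Re (M$$(2,2)), Re (M$$(3,3))]"
  by (simp add: diag_list_def upt_rec sucs)

lemma perm_mat_carrier[simp]: "perm_mat n \<sigma> \<in> carrier_mat n n" unfolding perm_mat_def by simp

theorem theorem2:
  fixes h \<rho> :: "complex mat"
  assumes h: "hermitian_mat 2 h"
    and eps: "eigs h ! 0 < eigs h ! 1"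
    and rho: "density_mat 4 \<rho>"
  shows "(\<forall>\<sigma>. \<sigma> permutes {..<4} \<longrightarrow>
            diag_list (perm_mat 4 \<sigma> * \<rho> * adj (perm_mat 4 \<sigma>)) = rev (sort (diag_list \<rho>)) \<longrightarrow>
            Sub_ic h h (perm_mat 4 \<sigma> * \<rho> * adj (perm_mat 4 \<sigma>)) \<ge> Sub_ic h h \<rho>)
       \<and> (\<forall>U. unitary_mat 4 U \<longrightarrow>
            (let \<rho>' = U * \<rho> * adj U in
              last (eigs (red_A (dephase \<rho>'))) + last (eigs (red_B (dephase \<rho>')))
                > last (eigs (red_A \<rho>)) + last (eigs (red_B \<rho>))
              \<longrightarrow> Sub h h \<rho>' > Sub h h \<rho>))"
proof
  define c where "c = eigs h ! 1 - eigs h ! 0"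
  have c0: "c > 0" using eps unfolding c_def by simp
  have rc: "\<rho> \<in> carrier_mat 4 4" and hr: "adj \<rho> = \<rho>" and tr1: "(\<Sum>i<4. \<rho> $$ (i,i)) = 1"
    using rho unfolding density_mat_def hermitian_mat_def by auto
  show "\<forall>\<sigma>. \<sigma> permutes {..<4} \<longrightarrow>
            diag_list (perm_mat 4 \<sigma> * \<rho> * adj (perm_mat 4 \<sigma>)) = rev (sort (diag_list \<rho>)) \<longrightarrow>
            Sub_ic h h (perm_mat 4 \<sigma> * \<rho> * adj (perm_mat 4 \<sigma>)) \<ge> Sub_ic h h \<rho>"
  proof (intro allI impI)
    fix \<sigma> :: "nat \<Rightarrow> nat"
    define M where "M = perm_mat 4 \<sigma> * \<rho> * adj (perm_mat 4 \<sigma>)"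
    assume "diag_list (perm_mat 4 \<sigma> * \<rho> * adj (perm_mat 4 \<sigma>)) = rev (sort (diag_list \<rho>))"
    then have dl: "diag_list M = rev (sort (diag_list \<rho>))" unfolding M_def .
    have Mc: "M \<in> carrier_mat 4 4" unfolding M_def using rc by (meson adj_carrier mult_carrier_mat perm_mat_carrier)
    have "length (sort (diag_list \<rho>)) = 4" using rc by (simp add: diag_list_def)
    then obtain a b c' d where s: "sort (diag_list \<rho>) = [a,b,c',d]" using list4 by blast
    have so: "a \<le> b" "b \<le> c'" "c' \<le> d" using sorted_sort_key[of "\<lambda>x. x" "diag_list \<rho>"] unfolding s by auto
    have st: "set (diag_list \<rho>) = {a,b,c',d}" using set_sort[of "\<lambda>x. x" "diag_list \<rho>"] unfolding s by auto
    have pin: "Re (\<rho>$$(i,i)) \<in> {a,b,c',d}" if "i < 4" for i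
      using st that rc by (auto simp: diag_list_def)
    have "Re (\<rho>$$(i,i)) \<ge> a \<and> Re (\<rho>$$(i,i)) \<le> d" if "i < 4" for i
      using pin[OF that] so by auto
    note bnd = this[of 0] this[of 1] this[of 2] this[of 3]
    have Md: "Re (M$$(0,0)) = d" "Re (M$$(1,1)) = c'" "Re (M$$(2,2)) = b" "Re (M$$(3,3)) = a"
      using dl unfolding diag_list4[OF Mc] s by auto
    have ineq: "\<bar>Re (\<rho>$$(0,0)) + Re (\<rho>$$(1,1)) - Re (\<rho>$$(2,2)) - Re (\<rho>$$(3,3))\<bar> +
     \<bar>Re (\<rho>$$(0,0)) + Re (\<rho>$$(2,2)) - Re (\<rho>$$(1,1)) - Re (\<rho>$$(3,3))\<bar> \<le>
      \<bar>d + c' - b - a\<bar> + \<bar>d + b - c' - a\<bar>"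
      using bnd so by (simp add: abs_if)
    show "Sub_ic h h M \<ge> Sub_ic h h \<rho>"
      unfolding subic_formula[OF Mc] subic_formula[OF rc] Md c_def[symmetric]
      using ineq c0 by (simp add: mult_left_mono)
  qed
  show "\<forall>U. unitary_mat 4 U \<longrightarrow>
            (let \<rho>' = U * \<rho> * adj U in
              last (eigs (red_A (dephase \<rho>'))) + last (eigs (red_B (dephase \<rho>')))
                > last (eigs (red_A \<rho>)) + last (eigs (red_B \<rho>))
              \<longrightarrow> Sub h h \<rho>' > Sub h h \<rho>)"
    unfolding Let_def
  proof (intro allI impI)
    fix U assume "unitary_mat 4 U"
    then have Uc: "U \<in> carrier_mat 4 4" and UU: "adj U * U = 1\<^sub>m 4"
      unfolding unitary_mat_def by auto
    define M where "M = U * \<rho> * adj U"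
    have Mc: "M \<in> carrier_mat 4 4" unfolding M_def using rc Uc by (meson adj_carrier mult_carrier_mat)
    have hM: "adj M = M"
    proof -
      have "adj M = adj (adj U) * adj (U * \<rho>)" unfolding M_def
        by (rule adj_mult[of _ 4 4 _ 4]) (use rc Uc in auto)
      also have "\<dots> = U * (adj \<rho> * adj U)" using adj_mult[of U 4 4 \<rho> 4] rc Uc by simp
      also have "\<dots> = M" unfolding M_def hr using rc Uc by (simp add: assoc_mult_mat[of _ 4 4 _ 4 _ 4])
      finally show ?thesis .
    qed
    have "tr M = tr (adj U * (U * \<rho>))" unfolding M_def
      by (rule tr_comm[of _ 4 4]) (use rc Uc in auto)
    also have "\<dots> = tr ((adj U * U) * \<rho>)" using rc Uc by (simp add: assoc_mult_mat[of _ 4 4 _ 4 _ 4])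
    also have "\<dots> = tr \<rho>" unfolding UU using rc by simp
    finally have "tr M = 1" using tr1 rc by (simp add: tr_def)
    then have tM: "Re (M$$(0,0)) + Re (M$$(1,1)) + Re (M$$(2,2)) + Re (M$$(3,3)) = 1"
      using Mc by (simp add: tr_def lt4 complex_eq_iff)
    have tr: "Re (\<rho>$$(0,0)) + Re (\<rho>$$(1,1)) + Re (\<rho>$$(2,2)) + Re (\<rho>$$(3,3)) = 1"
      using tr1 by (simp add: lt4 complex_eq_iff)
    note fM = sub_formula[OF Mc hM tM] and fr = sub_formula[OF rc hr tr]
    note dM = dephase_last[OF Mc]
    assume "last (eigs (red_A (dephase (U * \<rho> * adj U)))) + last (eigs (red_B (dephase (U * \<rho> * adj U))))
                > last (eigs (red_A \<rho>)) + last (eigs (red_B \<rho>))"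
    then have "last (eigs (red_A (dephase M))) + last (eigs (red_B (dephase M)))
                > last (eigs (red_A \<rho>)) + last (eigs (red_B \<rho>))" unfolding M_def .
    then have "last (eigs (red_A M)) + last (eigs (red_B M)) > last (eigs (red_A \<rho>)) + last (eigs (red_B \<rho>))"
      unfolding dM using fM(2-5) by (auto simp: max_def split: if_splits)
    then show "Sub h h (U * \<rho> * adj U) > Sub h h \<rho>"
      unfolding M_def[symmetric] fM(1) fr(1) c_def[symmetric] using c0 by simp
  qed
qed
end
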